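(* Let $\mathrm{k}\in\{\mathbb{R},\mathbb{C}\}$ and let $\mathcal{A}$ be a commutative unital Banach algebra over $\mathrm{k}$ whose only finite-dimensional subalgebra is $\mathrm{k}$. Then for all finite subsets $A,B$ of $\mathcal{A}$ with $\mathrm{k}\langle A\rangle\cap U(\mathcal{A})\neq\emptyset$ and $\mathrm{k}\langle B\rangle\cap U(\mathcal{A})\neq\emptyset$, $\dim_{\mathrm{k}}(AB)\geq\dim_{\mathrm{k}}(A)+\dim_{\mathrm{k}}(B)-1$.
   Context: Subalgebras contain $1$. $U(\mathcal{A})$ is the group of invertible elements, $\mathrm{k}\langle S\rangle$ the linear span of $S$, $\dim_{\mathrm{k}}(S)=\dim_{\mathrm{k}}\mathrm{k}\langle S\rangle$, and $AB=\{ab\mid a\in A,b\in B\}$. *)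

theory Defs
  imports "HOL-Analysis.Analysis"
begin

definition invertibles :: "'a::ring_1 set" where
  "invertibles = {x. \<exists>y. x * y = 1 \<and> y * x = 1}"

definition setprod :: "'a::times set \<Rightarrow> 'a set \<Rightarrow> 'a set" where
  "setprod A B = {a * b | a b. a \<in> A \<and> b \<in> B}"

definition ksubalgebra :: "('k::field \<Rightarrow> 'a::ring_1 \<Rightarrow> 'a) \<Rightarrow> 'a set \<Rightarrow> bool" where
  "ksubalgebra sc S \<longleftrightarrow> module.subspace sc S \<and> 1 \<in> S \<and> (\<forall>x\<in>S. \<forall>y\<in>S. x * y \<in> S)"

definition only_trivial_fd_subalgebra :: "('k::field \<Rightarrow> 'a::ring_1 \<Rightarrow> 'a) \<Rightarrow> bool" where
  "only_trivial_fd_subalgebra sc \<longleftrightarrow>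
     (\<forall>S. ksubalgebra sc S \<and> (\<exists>F. finite F \<and> S \<subseteq> module.span sc F)
          \<longrightarrow> S = range (\<lambda>c. sc c 1))"

text \<open>A complex Banach algebra structure on a real Banach algebra: a complex scalar
  multiplication extending the real one, making it a complex algebra with
  norm (c x) = |c| norm x.\<close>
definition complex_banach_algebra ::
  "(complex \<Rightarrow> 'a::{real_normed_algebra_1,banach} \<Rightarrow> 'a) \<Rightarrow> bool" where
  "complex_banach_algebra cs \<longleftrightarrow>
     vector_space cs \<and>
     (\<forall>r x. cs (complex_of_real r) x = scaleR r x) \<and>
     (\<forall>c x y. cs c (x * y) = cs c x * y \<and> cs c (x * y) = x * cs c y) \<and>
     (\<forall>c x. norm (cs c x) = cmod c * norm x)"

end

theory Submission
  imports Defs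
begin


lemma neumann:
  fixes x :: "'a::{real_normed_algebra_1,banach}"
  assumes "norm x < 1"
  shows "(1 - x) * suminf (\<lambda>n. x^n) = 1 \<and> suminf (\<lambda>n. x^n) * (1 - x) = 1"
proof -
  have sg: "summable (\<lambda>n. norm x ^ n)" using assms by (simp add: summable_geometric)
  have s: "summable (\<lambda>n. x^n)"
    by (rule summable_comparison_test[OF _ sg]) (auto intro: norm_power_ineq)
  define f where "f n = - (x ^ n)" for n
  have fl: "f \<longlonglongrightarrow> 0" unfolding f_def using tendsto_minus[OF LIMSEQ_power_zero[OF assms]] by simp
  have t: "(\<lambda>n. f (Suc n) - f n) sums (0 - f 0)"
    by (rule telescope_sums[OF fl])
  have e1: "(\<lambda>n. (1 - x) * x^n) = (\<lambda>n. f (Suc n) - f n)"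
    by (auto simp: algebra_simps f_def)
  have e2: "(\<lambda>n. x^n * (1 - x)) = (\<lambda>n. f (Suc n) - f n)"
    by (auto simp: algebra_simps power_commutes f_def)
  have a: "(\<lambda>n. (1 - x) * x^n) sums ((1-x) * suminf (\<lambda>n. x^n))"
    using sums_mult[OF summable_sums[OF s]] .
  have b: "(\<lambda>n. x^n * (1 - x)) sums (suminf (\<lambda>n. x^n) * (1-x))"
    using sums_mult2[OF summable_sums[OF s]] .
  have f0: "0 - f 0 = 1" by (simp add: f_def)
  show ?thesis using a b t e1 e2 sums_unique2 f0 by metis
qed

lemma neu_real:
  fixes x :: "'a::{real_normed_algebra_1,banach}"
  shows "\<exists>c::real. c \<noteq> 0 \<and> 1 + scaleR c x \<in> invertibles"
proof -
  define c where "c = - 1 / (2 * (norm x + 1))"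
  have p: "0 < 2*(norm x+1)" by (smt (verit) norm_ge_zero)
  have c0: "c \<noteq> 0" unfolding c_def using p by simp
  have ac: "abs c = 1 / (2*(norm x+1))" unfolding c_def using p by simp
  have "norm (- scaleR c x) = norm x / (2 * (norm x + 1))"
    by (simp add: ac)
  also have "\<dots> < 1" unfolding pos_divide_less_eq[OF p] by (smt (verit) norm_ge_zero)
  finally have "norm (- scaleR c x) < 1" .
  from neumann[OF this] have "1 + scaleR c x \<in> invertibles"
    unfolding invertibles_def by auto
  with c0 show ?thesis by blast
qed



context vector_space begin

definition fdim :: "'b set \<Rightarrow> bool" where "fdim V \<longleftrightarrow> (\<exists>F. finite F \<and> V \<subseteq> local.span F)"

lemma fdim_basis:
  assumes "local.fdim V"
  obtains B where "finite B" "B \<subseteq> V" "local.independent B" "V \<subseteq> local.span B" "card B = local.dim V"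
proof -
  obtain F where F: "finite F" "V \<subseteq> local.span F" using assms fdim_def by auto
  obtain B where B: "B \<subseteq> V" "local.independent B" "V \<subseteq> local.span B" "card B = local.dim V" using basis_exists by metis
  have "finite B" using independent_span_bound[OF F(1) B(2)] B(1) F(2) by auto
  with B that show ?thesis by blast
qed

lemma fdim_subset: "local.fdim W \<Longrightarrow> V \<subseteq> local.span W \<Longrightarrow> local.fdim V"
  unfolding fdim_def by (meson order_trans span_mono span_span subset_refl span_minimal subspace_span) 

lemma gdim_mono: assumes "V \<subseteq> local.span W" "local.fdim W" shows "local.dim V \<le> local.dim W"
proof -
  obtain B where B: "finite B" "B \<subseteq> W" "local.independent B" "W \<subseteq> local.span B" "card B = local.dim W"
    using fdim_basis[OF assms(2)] by blast
  have "V \<subseteq> local.span B" using assms(1) B(4) by (meson span_minimal subspace_span order_trans)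
  from dim_le_card[OF this B(1)] B(5) show ?thesis by simp
qed

lemma gindep_card_le: assumes "local.independent B" "B \<subseteq> local.span W" "local.fdim W" shows "finite B \<and> card B \<le> local.dim W"
proof -
  obtain C where C: "finite C" "C \<subseteq> W" "local.independent C" "W \<subseteq> local.span C" "card C = local.dim W"
    using fdim_basis[OF assms(3)] by blast
  have "B \<subseteq> local.span C" using assms(2) C(4) by (meson span_minimal subspace_span order_trans)
  from independent_span_bound[OF C(1) assms(1) this] C(5) show ?thesis by simp
qed

lemma gdim_psubset:
  assumes "local.subspace S" "S \<subseteq> T" "w \<in> T" "w \<notin> S" "local.fdim T"
  shows "local.dim S < local.dim T"
proof -
  have fS: "local.fdim S" using fdim_subset[OF assms(5)] assms(2) span_superset by blast
  obtain B where B: "finite B" "B \<subseteq> S" "local.independent B" "S \<subseteq> local.span B" "card B = local.dim S"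
    using fdim_basis[OF fS] by blast
  have sB: "local.span B = S" using B assms(1) span_minimal span_mono
    by (metis span_subspace)
  have wB: "w \<notin> local.span B" using sB assms(4) by simp
  then have "w \<notin> B" using span_superset by blast
  have ind: "local.independent (insert w B)" by (rule independent_insertI[OF wB B(3)])
  have "insert w B \<subseteq> local.span T" using B(2) assms(2,3) span_superset by blast
  from gindep_card_le[OF ind this assms(5)] B(1,5) \<open>w \<notin> B\<close> show ?thesis by simp
qed

proposition gdim_sums_Int:
  assumes "local.subspace S" "local.subspace T" "local.fdim S" "local.fdim T"
  shows "local.dim {x + y |x y. x \<in> S \<and> y \<in> T} + local.dim(S \<inter> T) = local.dim S + local.dim T" (is "local.dim ?ST + _ = _")
proof -
  obtain B where B: "B \<subseteq> S \<inter> T" "S \<inter> T \<subseteq> local.span B"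
             and indB: "local.independent B"
             and cardB: "card B = local.dim (S \<inter> T)"
    using basis_exists by metis
  then obtain C D where "B \<subseteq> C" "C \<subseteq> S" "local.independent C" "S \<subseteq> local.span C"
                    and "B \<subseteq> D" "D \<subseteq> T" "local.independent D" "T \<subseteq> local.span D"
    using maximal_independent_subset_extend
    by (metis Int_subset_iff \<open>B \<subseteq> S \<inter> T\<close> indB)
  have "finite C" using gindep_card_le[OF \<open>local.independent C\<close> _ assms(3)] \<open>C \<subseteq> S\<close> span_superset by blast
  have "finite D" using gindep_card_le[OF \<open>local.independent D\<close> _ assms(4)] \<open>D \<subseteq> T\<close> span_superset by blast
  have "finite B" using \<open>B \<subseteq> C\<close> \<open>finite C\<close> finite_subset by blast
  have Beq: "B = C \<inter> D"
  proof (rule spanning_subset_independent [symmetric])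
    show "local.independent (C \<inter> D)"
      by (meson \<open>local.independent C\<close> independent_mono inf.cobounded1)
  qed (use B \<open>C \<subseteq> S\<close> \<open>D \<subseteq> T\<close> \<open>B \<subseteq> C\<close> \<open>B \<subseteq> D\<close> in auto)
  then have Deq: "D = B \<union> (D - C)"
    by blast
  have CUD: "C \<union> D \<subseteq> ?ST"
  proof (simp, intro conjI)
    show "C \<subseteq> ?ST"
      using span_zero span_minimal [OF _ \<open>local.subspace T\<close>] \<open>C \<subseteq> S\<close> by force
    show "D \<subseteq> ?ST"
      using span_zero span_minimal [OF _ \<open>local.subspace S\<close>] \<open>D \<subseteq> T\<close> by force
  qed
  have "a v = 0" if 0: "(\<Sum>v\<in>C. a v *s v) + (\<Sum>v\<in>D - C. a v *s v) = 0"
                 and v: "v \<in> C \<union> (D-C)" for a v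
  proof -
    have CsS: "\<And>x. x \<in> C \<Longrightarrow> a x *s x \<in> S"
      using \<open>C \<subseteq> S\<close> \<open>local.subspace S\<close> subspace_scale by auto
    have eq: "(\<Sum>v\<in>D - C. a v *s v) = - (\<Sum>v\<in>C. a v *s v)"
      using that add_eq_0_iff by blast
    have "(\<Sum>v\<in>D - C. a v *s v) \<in> S"
      by (simp add: eq CsS \<open>local.subspace S\<close> subspace_neg subspace_sum)
    moreover have "(\<Sum>v\<in>D - C. a v *s v) \<in> T"
      apply (rule subspace_sum [OF \<open>local.subspace T\<close>])
      by (meson DiffD1 \<open>D \<subseteq> T\<close> \<open>local.subspace T\<close> subset_eq subspace_def)
    ultimately have "(\<Sum>v \<in> D-C. a v *s v) \<in> local.span B"
      using B by blast
    then obtain e where e: "(\<Sum>v\<in>B. e v *s v) = (\<Sum>v \<in> D-C. a v *s v)"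
      using span_finite [OF \<open>finite B\<close>] by force
    define cc where "cc x = (if x \<in> B then a x + e x else a x)" for x
    have [simp]: "C \<inter> B = B" "D \<inter> B = B" "C \<inter> - B = C-D" "B \<inter> (D - C) = {}"
      using \<open>B \<subseteq> C\<close> \<open>B \<subseteq> D\<close> Beq by blast+
    have f2: "(\<Sum>v\<in>C \<inter> D. e v *s v) = (\<Sum>v\<in>D - C. a v *s v)"
      using Beq e by presburger
    have f3: "(\<Sum>v\<in>C \<union> D. a v *s v) = (\<Sum>v\<in>C - D. a v *s v) + (\<Sum>v\<in>D - C. a v *s v) + (\<Sum>v\<in>C \<inter> D. a v *s v)"
      using \<open>finite C\<close> \<open>finite D\<close> sum.union_diff2 by blast
    have f4: "(\<Sum>v\<in>C \<union> (D - C). a v *s v) = (\<Sum>v\<in>C. a v *s v) + (\<Sum>v\<in>D - C. a v *s v)"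
      by (meson Diff_disjoint \<open>finite C\<close> \<open>finite D\<close> finite_Diff sum.union_disjoint)
    have "(\<Sum>v\<in>C. cc v *s v) = 0"
      using 0 f2 f3 f4
      apply (simp add: cc_def Beq \<open>finite C\<close> sum.If_cases algebra_simps sum.distrib
          if_distrib if_distribR)
      apply (simp add: add.commute add.left_commute diff_eq)
      done
    then have "\<And>v. v \<in> C \<Longrightarrow> cc v = 0"
      using independentD[OF \<open>local.independent C\<close> \<open>finite C\<close> subset_refl] by blast
    then have C0: "\<And>v. v \<in> C - B \<Longrightarrow> a v = 0"
      by (simp add: cc_def Beq) meson
    then have [simp]: "(\<Sum>x\<in>C - B. a x *s x) = 0"
      by simp
    have "(\<Sum>x\<in>C. a x *s x) = (\<Sum>x\<in>B. a x *s x)"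
    proof -
      have "C - D = C - B"
        using Beq by blast
      then show ?thesis
        using Beq \<open>(\<Sum>x\<in>C - B. a x *s x) = 0\<close> f3 f4 by auto
    qed
    with 0 have Dcc0: "(\<Sum>v\<in>D. a v *s v) = 0"
      by (subst Deq) (simp add: \<open>finite B\<close> \<open>finite D\<close> sum_Un)
    then have D0: "\<And>v. v \<in> D \<Longrightarrow> a v = 0"
      using independentD[OF \<open>local.independent D\<close> \<open>finite D\<close> subset_refl] by blast
    show ?thesis
      using v C0 D0 Beq by blast
  qed
  then have "local.independent (C \<union> (D - C))"
    by (intro independent_if_scalars_zero) (simp_all add: \<open>finite C\<close> \<open>finite D\<close> sum_Un del: Un_Diff_cancel)
  then have indCUD: "local.independent (C \<union> D)" by simp
  have "local.dim (S \<inter> T) = card B"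
    by (rule dim_unique [OF B indB refl])
  moreover have "local.dim S = card C"
    by (metis \<open>C \<subseteq> S\<close> \<open>local.independent C\<close> \<open>S \<subseteq> local.span C\<close> basis_card_eq_dim)
  moreover have "local.dim T = card D"
    by (metis \<open>D \<subseteq> T\<close> \<open>local.independent D\<close> \<open>T \<subseteq> local.span D\<close> basis_card_eq_dim)
  moreover have "local.dim ?ST = card(C \<union> D)"
  proof -
    have *: "\<And>x y. \<lbrakk>x \<in> S; y \<in> T\<rbrakk> \<Longrightarrow> x + y \<in> local.span (C \<union> D)"
      by (meson \<open>S \<subseteq> local.span C\<close> \<open>T \<subseteq> local.span D\<close> span_add span_mono subsetCE sup.cobounded1 sup.cobounded2)
    show ?thesis
      by (auto intro: * dim_unique [OF CUD _ indCUD refl])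
  qed
  ultimately show ?thesis
    using \<open>B = C \<inter> D\<close> [symmetric]
    by (simp add: \<open>finite C\<close> \<open>finite D\<close> card_Un_Int)
qed

end



locale kalg = vector_space sc for sc :: "'k::field \<Rightarrow> 'a::comm_ring_1 \<Rightarrow> 'a" +
  assumes scmult: "\<And>c x y. sc c (x * y) = sc c x * y"
  and neu: "\<And>x. \<exists>c. c \<noteq> 0 \<and> 1 + sc c x \<in> invertibles"
  and triv: "only_trivial_fd_subalgebra sc"
begin

lemma scmult2: "sc c (x * y) = x * sc c y"
  using scmult[of c y x] by (simp add: mult.commute)

lemma mhom: "module_hom sc sc ((*) a)"
  by unfold_locales (simp_all add: distrib_left scmult2)

lemma subspace_mult: "local.subspace S \<Longrightarrow> local.subspace ((*) a ` S)"
  using module_hom.subspace_image[OF mhom] by blast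

lemma span_mult: "local.span ((*) a ` S) = (*) a ` local.span S"
  using module_hom.span_image[OF mhom] by blast

lemma inv_mult_inj: assumes "a \<in> invertibles" shows "inj ((*) a)"
proof (rule injI)
  fix x y assume e: "a * x = a * y"
  obtain b where b: "b * a = 1" using assms unfolding invertibles_def by blast
  have "b * (a * x) = b * (a * y)" using e by simp
  then show "x = y" by (simp add: mult.assoc[symmetric] b)
qed

lemma dim_mult: assumes "a \<in> invertibles" shows "local.dim ((*) a ` S) = local.dim S"
proof -
  obtain B where B: "B \<subseteq> S" "local.independent B" "S \<subseteq> local.span B" "card B = local.dim S"
    using basis_exists by metis
  have inj: "inj ((*) a)" using inv_mult_inj[OF assms] .
  have i: "local.independent ((*) a ` B)"
    using module_hom.independent_injective_image[OF mhom B(2)] inj by (simp add: inj_on_def inj_def)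
  have "(*) a ` S \<subseteq> local.span ((*) a ` B)" using B(3) span_mult by blast
  from basis_card_eq_dim[OF _ this i] B(1,4) inj show ?thesis
    by (simp add: card_image inj_on_subset image_mono)
qed

lemma span_bilinear:
  assumes "x \<in> local.span F" "y \<in> local.span G"
  shows "x * y \<in> local.span (setprod F G)"
  using assms(1)
proof (induction rule: span_induct)
  case (step x)
  note xF = step
  show ?case using assms(2)
  proof (induction rule: span_induct)
    case (step y) then show ?case using xF unfolding setprod_def by (intro span_base) blast
  next
    case base show ?case
      by (rule module_hom.subspace_linear_preimage[OF mhom subspace_span])
  qed
next
  case base show ?case
    using module_hom.subspace_linear_preimage[OF mhom[of y] subspace_span]
    by (simp add: mult.commute)
qed

lemma fdim_setprod:
  assumes "local.fdim V" "local.fdim W" shows "local.fdim (setprod V W)"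
proof -
  obtain F where F: "finite F" "V \<subseteq> local.span F" using assms(1) fdim_def by auto
  obtain G where G: "finite G" "W \<subseteq> local.span G" using assms(2) fdim_def by auto
  have f1: "finite {x. x \<in> F}" "finite {y. y \<in> G}" using F(1) G(1) by simp_all
  have fin: "finite (setprod F G)" unfolding setprod_def by (rule finite_image_set2[OF f1])
  have "setprod V W \<subseteq> local.span (setprod F G)"
  proof
    fix p assume "p \<in> setprod V W"
    then obtain x y where "x \<in> V" "y \<in> W" "p = x * y" unfolding setprod_def by blast
    then show "p \<in> local.span (setprod F G)" using F(2) G(2) span_bilinear by blast
  qed
  with fin show ?thesis unfolding fdim_def by blast
qed


lemma main:
  "local.subspace V \<Longrightarrow> local.subspace W \<Longrightarrow> local.fdim V \<Longrightarrow> local.fdim W \<Longrightarrow> 1 \<in> V \<Longrightarrow> 1 \<in> W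
   \<Longrightarrow> local.dim V + local.dim W \<le> local.dim (setprod V W) + 1"
proof (induction "local.dim W" arbitrary: V W rule: less_induct)
  case less
  obtain F where F: "finite F" "V \<subseteq> local.span F" using less.prems(3) fdim_def by auto
  obtain G where G: "finite G" "W \<subseteq> local.span G" using less.prems(4) fdim_def by auto
  have fP: "local.fdim (setprod V W)" using fdim_setprod less.prems(3,4) by blast
  have VP: "V \<subseteq> local.span (setprod V W)"
  proof
    fix v assume "v \<in> V" then have "v * 1 \<in> setprod V W" unfolding setprod_def using less.prems(6) by blast
    then show "v \<in> local.span (setprod V W)" using span_base by simp
  qed
  have dimV: "local.dim V \<le> local.dim (setprod V W)" by (rule gdim_mono[OF VP fP])
  show ?case
  proof (cases "\<forall>w\<in>W. \<forall>v\<in>V. w * v \<in> V")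
    case True
    define H where "H = {x. \<forall>v\<in>V. x * v \<in> V}"
    have sH: "local.subspace H" unfolding local.subspace_def H_def
    proof (intro conjI ballI allI; clarsimp)
      show "\<And>v. v \<in> V \<Longrightarrow> 0 \<in> V" using less.prems(1) subspace_0 by blast
      show "\<And>x y v. \<forall>v\<in>V. x * v \<in> V \<Longrightarrow> \<forall>v\<in>V. y * v \<in> V \<Longrightarrow> v \<in> V \<Longrightarrow> (x + y) * v \<in> V"
        using less.prems(1) subspace_add by (simp add: distrib_right)
      show "\<And>c x v. \<forall>v\<in>V. x * v \<in> V \<Longrightarrow> v \<in> V \<Longrightarrow> sc c x * v \<in> V"
        using less.prems(1) subspace_scale by (metis scmult)
    qed
    have aH: "ksubalgebra sc H" unfolding ksubalgebra_def
      using sH by (auto simp: H_def mult.assoc)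
    have HV: "H \<subseteq> V" unfolding H_def using less.prems(5) by force
    have "H = range (\<lambda>c. sc c 1)" using triv aH HV F unfolding only_trivial_fd_subalgebra_def by blast
    moreover have "W \<subseteq> H" unfolding H_def using True by blast
    ultimately have "W \<subseteq> local.span {1}" using span_base span_scale by blast
    then have "local.dim W \<le> 1" using dim_le_card[of W "{1}"] by simp
    then show ?thesis using dimV by linarith
  next
    case False
    then obtain w v0 where w: "w \<in> W" "v0 \<in> V" "w * v0 \<notin> V" by blast
    obtain a where a: "a \<in> invertibles" "a \<in> V" "a * w \<notin> V"
    proof (cases "w \<in> V")
      case False
      have "(1::'a) \<in> invertibles" unfolding invertibles_def by auto
      with False less.prems(5) that[of 1] show ?thesis by simp
    next
      case True
      obtain c where c: "c \<noteq> 0" "1 + sc c v0 \<in> invertibles" using neu by blast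
      have aV: "1 + sc c v0 \<in> V" using less.prems(1,5) w(2) subspace_add subspace_scale by blast
      have "(1 + sc c v0) * w \<notin> V"
      proof
        assume h: "(1 + sc c v0) * w \<in> V"
        have "(1 + sc c v0) * w = w + sc c (v0 * w)" by (simp add: distrib_right scmult)
        then have "sc c (v0 * w) = (1 + sc c v0) * w - w" by simp
        then have "sc c (v0 * w) \<in> V" using h True less.prems(1) subspace_diff by metis
        then have "sc (inverse c) (sc c (v0 * w)) \<in> V" using less.prems(1) subspace_scale by blast
        then have "v0 * w \<in> V" using c(1) by simp
        then show False using w(3) by (simp add: mult.commute)
      qed
      with c aV that show ?thesis by blast
    qed
    obtain b where ab: "a * b = 1" "b * a = 1" using a(1) unfolding invertibles_def by blast
    define aW where "aW = (*) a ` W"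
    define V' where "V' = {x + y |x y. x \<in> V \<and> y \<in> aW}"
    define W' where "W' = W \<inter> (*) b ` V"
    have saW: "local.subspace aW" unfolding aW_def using subspace_mult less.prems(2) by blast
    have sV': "local.subspace V'" unfolding V'_def using subspace_sums less.prems(1) saW by blast
    have sW': "local.subspace W'" unfolding W'_def
      using subspace_inter less.prems(2) subspace_mult less.prems(1) by blast
    have fin_aG: "finite ((*) a ` G)" using G(1) by simp
    have aWs: "aW \<subseteq> local.span ((*) a ` G)" unfolding aW_def span_mult using G(2) by blast
    have faW: "local.fdim aW" unfolding fdim_def using fin_aG aWs by blast
    have fV': "local.fdim V'" unfolding fdim_def
    proof (intro exI conjI)
      show "finite (F \<union> (*) a ` G)" using F(1) fin_aG by simp
      show "V' \<subseteq> local.span (F \<union> (*) a ` G)" unfolding V'_def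
      proof clarify
        fix x y assume "x \<in> V" "y \<in> aW"
        then have "x \<in> local.span (F \<union> (*) a ` G)" "y \<in> local.span (F \<union> (*) a ` G)"
          using F(2) aWs span_mono[of F "F \<union> (*) a ` G"] span_mono[of "(*) a ` G" "F \<union> (*) a ` G"] by blast+
        then show "x + y \<in> local.span (F \<union> (*) a ` G)" by (rule span_add)
      qed
    qed
    have fW': "local.fdim W'" unfolding fdim_def W'_def using G by blast
    have oV': "1 \<in> V'" unfolding V'_def aW_def
    proof -
      have "1 = 1 + a * 0" by simp
      then show "1 \<in> {x + y |x y. x \<in> V \<and> y \<in> (*) a ` W}"
        using less.prems(5) less.prems(2) subspace_0 by blast
    qed
    have oW': "1 \<in> W'" unfolding W'_def using less.prems(6) a(2) ab(2) by (auto intro: image_eqI[of 1 _ a])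
    have wW': "w \<notin> W'"
    proof
      assume "w \<in> W'"
      then obtain v where "v \<in> V" "w = b * v" unfolding W'_def by blast
      then have "a * w = v" using ab(1) by (simp add: mult.assoc[symmetric])
      with \<open>v \<in> V\<close> a(3) show False by simp
    qed
    have lt: "local.dim W' < local.dim W"
      by (rule gdim_psubset[OF sW' _ w(1) wW' less.prems(4)]) (auto simp: W'_def)
    have IH: "local.dim V' + local.dim W' \<le> local.dim (setprod V' W') + 1"
      using less.hyps[OF lt sV' sW' fV' fW' oV' oW'] .
    have si: "local.dim V' + local.dim (V \<inter> aW) = local.dim V + local.dim aW"
      unfolding V'_def by (rule gdim_sums_Int[OF less.prems(1) saW less.prems(3) faW])
    have daW: "local.dim aW = local.dim W" unfolding aW_def using dim_mult[OF a(1)] .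
    have Veq: "V \<inter> aW = (*) a ` W'"
    proof
      show "V \<inter> aW \<subseteq> (*) a ` W'"
      proof
        fix x assume x: "x \<in> V \<inter> aW"
        then obtain y where y: "y \<in> W" "x = a * y" unfolding aW_def by blast
        have "y = b * x" using y(2) ab(2) by (simp add: mult.assoc[symmetric])
        then have "y \<in> W'" unfolding W'_def using x y(1) by blast
        then show "x \<in> (*) a ` W'" using y(2) by blast
      qed
    next
      show "(*) a ` W' \<subseteq> V \<inter> aW"
      proof
        fix x assume "x \<in> (*) a ` W'"
        then obtain y v where yv: "y \<in> W" "v \<in> V" "y = b * v" "x = a * y" unfolding W'_def by blast
        then have "x = v" using ab(1) by (simp add: mult.assoc[symmetric])
        then show "x \<in> V \<inter> aW" unfolding aW_def using yv by blast
      qed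
    qed
    have dVa: "local.dim (V \<inter> aW) = local.dim W'" unfolding Veq using dim_mult[OF a(1)] .
    have PP: "setprod V' W' \<subseteq> local.span (setprod V W)"
    proof
      fix p assume "p \<in> setprod V' W'"
      then obtain x y z v where p: "x \<in> V" "y \<in> W" "z \<in> W" "v \<in> V" "z = b * v" "p = (x + a * y) * z"
        unfolding setprod_def V'_def aW_def W'_def by blast
      have e: "(x + a * y) * (b * v) = x * (b * v) + (a * b) * (v * y)" by (simp add: algebra_simps)
      have "p = x * z + v * y" using e p(5,6) ab(1) by simp
      moreover have "x * z \<in> setprod V W" "v * y \<in> setprod V W"
        unfolding setprod_def using p by blast+
      ultimately show "p \<in> local.span (setprod V W)" using span_add span_base by metis
    qed
    have "local.dim (setprod V' W') \<le> local.dim (setprod V W)" by (rule gdim_mono[OF PP fP])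
    then show ?thesis using IH si daW dVa by linarith
  qed
qed

lemma finalk:
  assumes "finite A" "finite B" "local.span A \<inter> invertibles \<noteq> {}" "local.span B \<inter> invertibles \<noteq> {}"
  shows "int (local.dim (setprod A B)) \<ge> int (local.dim A) + int (local.dim B) - 1"
proof -
  obtain u where u: "u \<in> local.span A" "u \<in> invertibles" using assms(3) by blast
  obtain v where v: "v \<in> local.span B" "v \<in> invertibles" using assms(4) by blast
  have "\<exists>y. u * y = 1 \<and> y * u = 1" using u(2) by (simp add: invertibles_def)
  then obtain u' where u': "u' * u = 1" by blast
  have "\<exists>y. v * y = 1 \<and> y * v = 1" using v(2) by (simp add: invertibles_def)
  then obtain v' where v': "v' * v = 1" by blast
  have iu': "u' \<in> invertibles" unfolding invertibles_def mem_Collect_eq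
    by (rule exI[of _ u]) (simp add: u' mult.commute[of u u'])
  have iv': "v' \<in> invertibles" unfolding invertibles_def mem_Collect_eq
    by (rule exI[of _ v]) (simp add: v' mult.commute[of v v'])
  have e: "(u' * v') * (u * v) = (u' * u) * (v' * v)" by (metis mult.assoc mult.left_commute)
  have e2: "(u * v) * (u' * v') = (u' * v') * (u * v)" by (rule mult.commute)
  have iuv: "u' * v' \<in> invertibles" unfolding invertibles_def mem_Collect_eq
    by (rule exI[of _ "u * v"]) (simp only: e e2 u' v' mult_1_left)
  define V where "V = (*) u' ` local.span A"
  define W where "W = (*) v' ` local.span B"
  have sV: "local.subspace V" unfolding V_def by (rule subspace_mult[OF subspace_span])
  have sW: "local.subspace W" unfolding W_def by (rule subspace_mult[OF subspace_span])
  have fV: "local.fdim V" unfolding fdim_def V_def span_mult[symmetric]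
    by (rule exI[of _ "(*) u' ` A"]) (simp add: assms(1))
  have fW: "local.fdim W" unfolding fdim_def W_def span_mult[symmetric]
    by (rule exI[of _ "(*) v' ` B"]) (simp add: assms(2))
  have oV: "1 \<in> V" unfolding V_def using u(1) u'[symmetric] by (rule rev_image_eqI)
  have oW: "1 \<in> W" unfolding W_def using v(1) v'[symmetric] by (rule rev_image_eqI)
  have dV: "local.dim V = local.dim A" unfolding V_def by (simp only: dim_mult[OF iu'] dim_span)
  have dW: "local.dim W = local.dim B" unfolding W_def by (simp only: dim_mult[OF iv'] dim_span)
  have M: "local.dim V + local.dim W \<le> local.dim (setprod V W) + 1" by (rule main[OF sV sW fV fW oV oW])
  define P where "P = (*) (u' * v') ` setprod A B"
  have f1: "finite {x. x \<in> A}" "finite {y. y \<in> B}" using assms(1,2) by simp_all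
  have finAB: "finite (setprod A B)" unfolding setprod_def by (rule finite_image_set2[OF f1])
  have fP: "local.fdim P" unfolding fdim_def
    by (rule exI[of _ P]) (simp add: P_def finAB span_superset)
  have VW: "setprod V W \<subseteq> local.span P"
  proof
    fix p assume "p \<in> setprod V W"
    then obtain s t where st: "s \<in> V" "t \<in> W" "p = s * t" unfolding setprod_def by blast
    obtain x where x: "x \<in> local.span A" "s = u' * x" using st(1) unfolding V_def by blast
    obtain y where y: "y \<in> local.span B" "t = v' * y" using st(2) unfolding W_def by blast
    have xy: "p = (u' * x) * (v' * y)" using st(3) x(2) y(2) by simp
    have "x * y \<in> local.span (setprod A B)" by (rule span_bilinear[OF x(1) y(1)])
    moreover have "p = (u' * v') * (x * y)" using xy by (metis mult.assoc mult.left_commute)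
    ultimately show "p \<in> local.span P" unfolding P_def span_mult by (rule rev_image_eqI)
  qed
  have "local.dim (setprod V W) \<le> local.dim P" by (rule gdim_mono[OF VW fP])
  also have "\<dots> = local.dim (setprod A B)" unfolding P_def using dim_mult[OF iuv] .
  finally show ?thesis using M dV dW by linarith
qed

end


theorem corollary4p3:
  shows
  "(only_trivial_fd_subalgebra (scaleR :: real \<Rightarrow> 'a \<Rightarrow> 'a::{real_normed_algebra_1,banach,comm_ring_1})
      \<longrightarrow> (\<forall>A B :: 'a set. finite A \<and> finite B
            \<and> span A \<inter> invertibles \<noteq> {} \<and> span B \<inter> invertibles \<noteq> {}
            \<longrightarrow> int (dim (setprod A B)) \<ge> int (dim A) + int (dim B) - 1))
   \<and> (\<forall>cs :: complex \<Rightarrow> 'b \<Rightarrow> 'b::{real_normed_algebra_1,banach,comm_ring_1}.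
        complex_banach_algebra cs \<and> only_trivial_fd_subalgebra cs
      \<longrightarrow> (\<forall>A B :: 'b set. finite A \<and> finite B
            \<and> module.span cs A \<inter> invertibles \<noteq> {} \<and> module.span cs B \<inter> invertibles \<noteq> {}
            \<longrightarrow> int (vector_space.dim cs (setprod A B))
                  \<ge> int (vector_space.dim cs A) + int (vector_space.dim cs B) - 1))"
proof (rule conjI)
  show "only_trivial_fd_subalgebra (scaleR :: real \<Rightarrow> 'a \<Rightarrow> 'a)
      \<longrightarrow> (\<forall>A B :: 'a set. finite A \<and> finite B
            \<and> span A \<inter> invertibles \<noteq> {} \<and> span B \<inter> invertibles \<noteq> {}
            \<longrightarrow> int (dim (setprod A B)) \<ge> int (dim A) + int (dim B) - 1)"
  proof (rule impI, intro allI)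
    fix A B :: "'a set"
    assume triv: "only_trivial_fd_subalgebra (scaleR :: real \<Rightarrow> 'a \<Rightarrow> 'a)"
    have K: "kalg (scaleR :: real \<Rightarrow> 'a \<Rightarrow> 'a)"
    proof -
      have 1: "vector_space (scaleR :: real \<Rightarrow> 'a \<Rightarrow> 'a)" by (rule real_vector.vector_space_axioms)
      have 2: "\<forall>x::'a. \<exists>c::real. c \<noteq> 0 \<and> 1 + scaleR c x \<in> invertibles" using neu_real by blast
      have 3: "\<forall>(c::real) (x::'a) y. scaleR c (x * y) = scaleR c x * y" by simp
      show ?thesis unfolding kalg_def kalg_axioms_def using 1 2 3 triv by blast
    qed
    show "finite A \<and> finite B \<and> span A \<inter> invertibles \<noteq> {} \<and> span B \<inter> invertibles \<noteq> {}
            \<longrightarrow> int (dim (setprod A B)) \<ge> int (dim A) + int (dim B) - 1"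
      using kalg.finalk[OF K, of A B] by (simp add: span_raw_def dim_raw_def)
  qed
next
  show "\<forall>cs :: complex \<Rightarrow> 'b \<Rightarrow> 'b.
        complex_banach_algebra cs \<and> only_trivial_fd_subalgebra cs
      \<longrightarrow> (\<forall>A B :: 'b set. finite A \<and> finite B
            \<and> module.span cs A \<inter> invertibles \<noteq> {} \<and> module.span cs B \<inter> invertibles \<noteq> {}
            \<longrightarrow> int (vector_space.dim cs (setprod A B))
                  \<ge> int (vector_space.dim cs A) + int (vector_space.dim cs B) - 1)"
  proof (rule allI, rule impI, intro allI)
    fix cs :: "complex \<Rightarrow> 'b \<Rightarrow> 'b" and A B :: "'b set"
    assume h: "complex_banach_algebra cs \<and> only_trivial_fd_subalgebra cs"
    have vs: "vector_space cs" and r: "\<And>r x. cs (complex_of_real r) x = scaleR r x"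
      and m: "\<And>c x y. cs c (x * y) = cs c x * y"
      using h unfolding complex_banach_algebra_def by auto
    have n: "\<exists>c. c \<noteq> 0 \<and> 1 + cs c x \<in> invertibles" for x
    proof -
      obtain c :: real where c: "c \<noteq> 0" "1 + scaleR c x \<in> invertibles" using neu_real by blast
      then show ?thesis using r[of c x] by (intro exI[of _ "complex_of_real c"]) simp
    qed
    have K: "kalg cs"
      unfolding kalg_def kalg_axioms_def using vs m n h by blast
    show "finite A \<and> finite B \<and> module.span cs A \<inter> invertibles \<noteq> {} \<and> module.span cs B \<inter> invertibles \<noteq> {}
            \<longrightarrow> int (vector_space.dim cs (setprod A B))
                  \<ge> int (vector_space.dim cs A) + int (vector_space.dim cs B) - 1"
      using kalg.finalk[OF K, of A B] by simp
  qed
qed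

end
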